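(* Let $n>0$. Then $a(m)>a(n)$ for all $m>n$ if and only if the Fibonacci representation $(n)_F$ belongs to the regular language $10(100^*10)^*0^*$.
   Context: Let $(F_n)_{n\ge 0}$ be the Fibonacci numbers: $F_0=0$, $F_1=1$, $F_n=F_{n-1}+F_{n-2}$ for $n\ge 2$. Define $(a(n))_{n\ge 0}$ (OEIS A105774) by $a(0)=0$, $a(1)=1$, and for $n\ge 2$, $a(n)=F_{j+1}-a(n-F_j)$, where $j\ge 2$ is the unique index with $F_j<n\le F_{j+1}$. The Fibonacci (Zeckendorf) representation $(n)_F$ of $n\ge1$ is the unique binary string $e_1e_2\cdots e_t$ with $e_1=1$, no two consecutive $1$'s, and $n=\sum_{i=1}^t e_iF_{t-i+2}$. In the regular expression, juxtaposition is concatenation, $w^*$ denotes zero or more repetitions of $w$, and the star applies to the immediately preceding symbol or parenthesized group (so $100^*10$ denotes the strings $10\,0^k\,10$, $k\ge0$). *)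

theory Defs
  imports Main "HOL-Number_Theory.Fib"
begin

lemma fib_ge_idx: "n \<le> fib (Suc (Suc n))"
proof (induction n rule: nat_less_induct)
  case (1 n)
  show ?case
  proof (cases n)
    case 0 then show ?thesis by simp
  next
    case (Suc m)
    then have "m \<le> fib (Suc (Suc m))" using 1 by simp
    moreover have "fib (Suc (Suc (Suc m))) = fib (Suc (Suc m)) + fib (Suc m)" by simp
    moreover have "fib (Suc m) \<ge> 1" using fib_neq_0_nat[of "Suc m"] by simp
    ultimately show ?thesis using Suc by simp
  qed
qed

lemma fib_index_ex1:
  assumes "2 \<le> n"
  shows "\<exists>!j. 2 \<le> j \<and> fib j < n \<and> n \<le> fib (Suc j)"
proof -
  define j0 where "j0 = (LEAST j. n \<le> fib (Suc j))"
  have ex: "n \<le> fib (Suc (Suc (Suc n)))" using fib_ge_idx[of "Suc n"] by simp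
  have j0: "n \<le> fib (Suc j0)" unfolding j0_def by (rule LeastI[where P="\<lambda>j. n \<le> fib (Suc j)", OF ex])
  have min: "\<And>k. k < j0 \<Longrightarrow> fib (Suc k) < n"
    unfolding j0_def using not_less_Least by (metis not_le)
  have "j0 \<noteq> 0" using j0 assms by (cases j0) auto
  moreover have "j0 \<noteq> 1" using j0 assms by auto
  ultimately have j2: "2 \<le> j0" by simp
  have lt: "fib j0 < n" using min[of "j0 - 1"] j2 by (cases j0) auto
  show ?thesis
  proof (rule ex1I[of _ j0])
    show "2 \<le> j0 \<and> fib j0 < n \<and> n \<le> fib (Suc j0)" using j2 lt j0 by simp
  next
    fix j assume h: "2 \<le> j \<and> fib j < n \<and> n \<le> fib (Suc j)"
    show "j = j0"
    proof (rule ccontr)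
      assume "j \<noteq> j0"
      then have "j < j0 \<or> j0 < j" by arith
      then show False
      proof
        assume "j < j0" then have "fib (Suc j) \<le> fib j0" by (simp add: fib_mono)
        with h lt show False by simp
      next
        assume "j0 < j" then have "fib (Suc j0) \<le> fib j" by (simp add: fib_mono)
        with h j0 show False by simp
      qed
    qed
  qed
qed

text \<open>The unique index j \<ge> 2 with F_j < n \<le> F_{j+1} (meaningful for n \<ge> 2).\<close>
definition fib_index :: "nat \<Rightarrow> nat" where
  "fib_index n = (THE j. 2 \<le> j \<and> fib j < n \<and> n \<le> fib (Suc j))"

lemma fib_index_props:
  assumes "2 \<le> n"
  shows "2 \<le> fib_index n \<and> fib (fib_index n) < n \<and> n \<le> fib (Suc (fib_index n))"
  unfolding fib_index_def by (rule theI'[OF fib_index_ex1[OF assms]])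

function A105774 :: "nat \<Rightarrow> int" where
  "A105774 n = (if n \<le> 1 then int n
     else int (fib (Suc (fib_index n))) - A105774 (n - fib (fib_index n)))"
  by auto
termination
proof (relation "measure id")
  fix n :: nat assume "\<not> n \<le> 1"
  then have "2 \<le> n" by simp
  from fib_index_props[OF this] have "0 < fib (fib_index n)"
    using fib_neq_0_nat by simp
  then show "(n - fib (fib_index n), n) \<in> measure id" using \<open>2 \<le> n\<close> by simp
qed simp

declare A105774.simps [simp del]

text \<open>Binary strings are lists of digits in {0,1}, most significant digit first.
  Value of e_1 ... e_t is sum of e_i F_{t-i+2}; with 0-based position i the weight is F_{t-i+1}.\<close>
definition fib_value :: "nat list \<Rightarrow> nat" where
  "fib_value w = (\<Sum>i<length w. w ! i * fib (length w - i + 1))"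

definition is_fib_rep :: "nat list \<Rightarrow> bool" where
  "is_fib_rep w \<longleftrightarrow> w \<noteq> [] \<and> set w \<subseteq> {0, 1} \<and> hd w = 1 \<and>
     (\<forall>i. Suc i < length w \<longrightarrow> \<not> (w ! i = 1 \<and> w ! Suc i = 1))"

definition fib_rep :: "nat \<Rightarrow> nat list" where
  "fib_rep n = (THE w. is_fib_rep w \<and> fib_value w = n)"

definition lang :: "nat list set" where
  "lang = {[1,0] @ concat (map (\<lambda>k. [1,0] @ replicate k 0 @ [1,0]) ks) @ replicate m 0
           | ks m. True}"

end

theory Submission
  imports Defs
begin


lemma fibSS: "fib (Suc (Suc n)) = fib (Suc n) + fib n" by simp

lemma fib_ge1: "1 \<le> j \<Longrightarrow> 1 \<le> fib j"
  using fib_neq_0_nat[of j] by simp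

lemma fib_index_eq:
  assumes "2 \<le> j" "fib j < n" "n \<le> fib (Suc j)"
  shows "fib_index n = j"
proof -
  have "1 \<le> fib j" using fib_ge1[of j] assms by simp
  then have n2: "2 \<le> n" using assms by simp
  show ?thesis unfolding fib_index_def
    by (rule the1_equality[OF fib_index_ex1[OF n2]]) (use assms in simp)
qed

lemma a_block:
  assumes "2 \<le> j" "fib j < n" "n \<le> fib (Suc j)"
  shows "A105774 n = int (fib (Suc j)) - A105774 (n - fib j)"
proof -
  have "1 \<le> fib j" using fib_ge1[of j] assms by simp
  then have n2: "2 \<le> n" using assms by simp
  show ?thesis using fib_index_eq[OF assms] n2 by (subst A105774.simps) simp
qed

lemma block_ex: "2 \<le> n \<Longrightarrow> \<exists>j. 2 \<le> j \<and> fib j < n \<and> n \<le> fib (Suc j)"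
  using fib_index_props by blast

lemma a0: "A105774 0 = 0" by (subst A105774.simps) simp
lemma a1: "A105774 1 = 1" by (subst A105774.simps) simp
lemma a1' [simp]: "A105774 (Suc 0) = 1" by (subst A105774.simps) simp
lemma a2: "A105774 2 = 1"
proof -
  have "A105774 2 = int (fib (Suc 2)) - A105774 (2 - fib 2)"
    by (rule a_block) (auto simp: numeral_eq_Suc)
  then show ?thesis by (simp add: numeral_eq_Suc a1')
qed

lemma fib_Suc_split: "2 \<le> j \<Longrightarrow> fib (Suc j) = fib j + fib (j - 1)"
  by (cases j; cases "j - 1") auto

lemma a_bounds:
  "2 \<le> j \<Longrightarrow> fib j < n \<Longrightarrow> n \<le> fib (Suc j) \<Longrightarrow>
    int (fib j) \<le> A105774 n \<and> A105774 n < int (fib (Suc j)) \<and> (4 \<le> j \<longrightarrow> int (fib j) < A105774 n)"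
proof (induction n arbitrary: j rule: less_induct)
  case (less n)
  define k where "k = n - fib j"
  have fs: "fib (Suc j) = fib j + fib (j - 1)" using fib_Suc_split less.prems by simp
  have fj1: "1 \<le> fib j" using fib_ge1[of j] less.prems by simp
  have k1: "1 \<le> k" and kle: "k \<le> fib (j - 1)" and kn: "k < n"
    using less.prems fs fj1 unfolding k_def by auto
  have an: "A105774 n = int (fib (Suc j)) - A105774 k"
    unfolding k_def by (rule a_block) (use less.prems in auto)
  have akp: "1 \<le> A105774 k"
  proof (cases "k = 1")
    case True then show ?thesis by (simp add: a1 a1')
  next
    case False
    then have "2 \<le> k" using k1 by simp
    then obtain q where q: "2 \<le> q" "fib q < k" "k \<le> fib (Suc q)" using block_ex by blast
    have "int (fib q) \<le> A105774 k" using less.IH[OF kn q] by simp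
    moreover have "1 \<le> fib q" using fib_ge1[of q] q by simp
    ultimately show ?thesis by simp
  qed
  have akl: "A105774 k \<le> int (fib (j - 1)) \<and> (4 \<le> j \<longrightarrow> A105774 k < int (fib (j - 1)))"
  proof (cases "k = 1")
    case True
    have "1 \<le> fib (j - 1)" using fib_ge1[of "j - 1"] less.prems by simp
    moreover have "4 \<le> j \<Longrightarrow> 2 \<le> fib (j - 1)"
      using fib_mono[of 3 "j - 1"] by (simp add: numeral_eq_Suc)
    ultimately show ?thesis using True by (auto simp: a1 a1')
  next
    case False
    then have "2 \<le> k" using k1 by simp
    then obtain q where q: "2 \<le> q" "fib q < k" "k \<le> fib (Suc q)" using block_ex by blast
    have "A105774 k < int (fib (Suc q))" using less.IH[OF kn q] by simp
    moreover have "Suc q \<le> j - 1"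
    proof (rule ccontr)
      assume "\<not> Suc q \<le> j - 1"
      then have "fib (j - 1) \<le> fib q" using fib_mono[of "j - 1" q] by simp
      then show False using q kle by simp
    qed
    then have "fib (Suc q) \<le> fib (j - 1)" by (rule fib_mono)
    ultimately show ?thesis by simp
  qed
  show ?case using an akp akl fs by auto
qed

lemma a_up: "2 \<le> n \<Longrightarrow> n \<le> fib m \<Longrightarrow> A105774 n < int (fib m)"
proof -
  assume n: "2 \<le> n" "n \<le> fib m"
  then obtain j where j: "2 \<le> j" "fib j < n" "n \<le> fib (Suc j)" using block_ex by blast
  have "Suc j \<le> m"
  proof (rule ccontr)
    assume "\<not> Suc j \<le> m" then have "fib m \<le> fib j" using fib_mono[of m j] by simp
    then show False using j n by simp
  qed
  then have "fib (Suc j) \<le> fib m" by (rule fib_mono)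
  then show ?thesis using a_bounds[OF j] by simp
qed

lemma a_low: "2 \<le> m \<Longrightarrow> fib m < n \<Longrightarrow> int (fib m) \<le> A105774 n"
proof -
  assume m: "2 \<le> m" "fib m < n"
  have "1 \<le> fib m" using fib_ge1[of m] m by simp
  then have "2 \<le> n" using m by simp
  then obtain j where j: "2 \<le> j" "fib j < n" "n \<le> fib (Suc j)" using block_ex by blast
  have "m \<le> j"
  proof (rule ccontr)
    assume "\<not> m \<le> j" then have "fib (Suc j) \<le> fib m" using fib_mono[of "Suc j" m] by simp
    then show False using j m by simp
  qed
  then have "fib m \<le> fib j" by (rule fib_mono)
  then show ?thesis using a_bounds[OF j] by simp
qed

definition good :: "nat \<Rightarrow> bool" where
  "good n \<longleftrightarrow> (\<forall>m>n. A105774 m > A105774 n)"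

lemma not_good1: "\<not> good 1"
  unfolding good_def
proof
  assume "\<forall>m>1. A105774 1 < A105774 m"
  then have "A105774 1 < A105774 2" by simp
  then show False using a1 a2 by simp
qed

lemma G1:
  assumes j: "2 \<le> j" "fib j < n" "n \<le> fib (Suc j)"
  shows "good n \<longleftrightarrow> (\<forall>m. n < m \<and> m \<le> fib (Suc j) \<longrightarrow> A105774 m > A105774 n)"
proof
  assume "good n" then show "\<forall>m. n < m \<and> m \<le> fib (Suc j) \<longrightarrow> A105774 m > A105774 n"
    unfolding good_def by blast
next
  assume h: "\<forall>m. n < m \<and> m \<le> fib (Suc j) \<longrightarrow> A105774 m > A105774 n"
  show "good n" unfolding good_def
  proof (intro allI impI)
    fix m assume "n < m"
    show "A105774 n < A105774 m"
    proof (cases "m \<le> fib (Suc j)")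
      case True then show ?thesis using h \<open>n < m\<close> by blast
    next
      case False
      then have "int (fib (Suc j)) \<le> A105774 m" using a_low[of "Suc j" m] j by simp
      then show ?thesis using a_bounds[OF j] by simp
    qed
  qed
qed

lemma G2:
  assumes j: "2 \<le> j" "fib j < n" "n \<le> fib (Suc j)"
  shows "good n \<longleftrightarrow> (\<forall>k'. n - fib j < k' \<and> k' \<le> fib (j - 1) \<longrightarrow> A105774 k' < A105774 (n - fib j))"
proof -
  have fs: "fib (Suc j) = fib j + fib (j - 1)" using fib_Suc_split j by simp
  have an: "A105774 n = int (fib (Suc j)) - A105774 (n - fib j)" by (rule a_block[OF j])
  have "(\<forall>m. n < m \<and> m \<le> fib (Suc j) \<longrightarrow> A105774 m > A105774 n) \<longleftrightarrow>
        (\<forall>k'. n - fib j < k' \<and> k' \<le> fib (j - 1) \<longrightarrow> A105774 k' < A105774 (n - fib j))"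
  proof
    assume h: "\<forall>m. n < m \<and> m \<le> fib (Suc j) \<longrightarrow> A105774 m > A105774 n"
    show "\<forall>k'. n - fib j < k' \<and> k' \<le> fib (j - 1) \<longrightarrow> A105774 k' < A105774 (n - fib j)"
    proof (intro allI impI)
      fix k' assume k': "n - fib j < k' \<and> k' \<le> fib (j - 1)"
      have m: "n < fib j + k'" "fib j + k' \<le> fib (Suc j)" using k' fs j by auto
      have "A105774 (fib j + k') = int (fib (Suc j)) - A105774 (fib j + k' - fib j)"
        by (rule a_block) (use j m k' in auto)
      then show "A105774 k' < A105774 (n - fib j)" using h m an by fastforce
    qed
  next
    assume h: "\<forall>k'. n - fib j < k' \<and> k' \<le> fib (j - 1) \<longrightarrow> A105774 k' < A105774 (n - fib j)"
    show "\<forall>m. n < m \<and> m \<le> fib (Suc j) \<longrightarrow> A105774 m > A105774 n"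
    proof (intro allI impI)
      fix m assume m: "n < m \<and> m \<le> fib (Suc j)"
      have "A105774 m = int (fib (Suc j)) - A105774 (m - fib j)"
        by (rule a_block) (use j m in auto)
      moreover have "A105774 (m - fib j) < A105774 (n - fib j)"
        proof (rule h[rule_format])
        show "n - fib j < m - fib j \<and> m - fib j \<le> fib (j - 1)" using m fs j by auto
      qed
      ultimately show "A105774 m > A105774 n" using an by simp
    qed
  qed
  then show ?thesis using G1[OF j] by simp
qed

lemma L_good:
  assumes l: "1 \<le> l" "l \<le> fib p"
  shows "(\<forall>l'. l < l' \<and> l' \<le> fib p \<longrightarrow> A105774 l' > A105774 l) \<longleftrightarrow> (l = fib p \<or> good l)"
proof
  assume h: "\<forall>l'. l < l' \<and> l' \<le> fib p \<longrightarrow> A105774 l' > A105774 l"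
  show "l = fib p \<or> good l"
  proof (cases "l = fib p")
    case True then show ?thesis by simp
  next
    case False
    then have lt: "l < fib p" using l by simp
    show ?thesis
    proof (cases "l = 1")
      case True
      then have "2 \<le> fib p" using lt by simp
      then have "A105774 2 > A105774 1" using h True by simp
      then show ?thesis using a1 a2 by simp
    next
      case False
      then have "2 \<le> l" using l by simp
      then obtain q where q: "2 \<le> q" "fib q < l" "l \<le> fib (Suc q)" using block_ex by blast
      have "Suc q \<le> p"
      proof (rule ccontr)
        assume "\<not> Suc q \<le> p" then have "fib p \<le> fib q" using fib_mono[of p q] by simp
        then show False using q lt by simp
      qed
      then have "fib (Suc q) \<le> fib p" by (rule fib_mono)
      then have "good l" using G1[OF q] h by auto
      then show ?thesis by simp
    qed
  qed
next
  assume "l = fib p \<or> good l"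
  then show "\<forall>l'. l < l' \<and> l' \<le> fib p \<longrightarrow> A105774 l' > A105774 l"
    unfolding good_def using l by auto
qed

lemma fib_num: "fib (i+3) = fib (i+2) + fib (i+1)" "fib (i+4) = fib (i+3) + fib (i+2)"
   "fib (i+5) = fib (i+4) + fib (i+3)" "fib (i+2) = fib (i+1) + fib i"
  by (simp_all add: numeral_eq_Suc)

lemma G3:
  assumes n: "fib (i+4) < n" "n \<le> fib (i+5)"
  shows "good n \<longleftrightarrow> (fib (i+4) + fib (i+2) < n \<and>
                       (n = fib (i+5) \<or> good (n - fib (i+4) - fib (i+2))))"
proof -
  define k where "k = n - fib (i+4)"
  have j: "2 \<le> i + 4" "fib (i+4) < n" "n \<le> fib (Suc (i+4))" using n by (auto simp: numeral_eq_Suc)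
  have g: "good n \<longleftrightarrow> (\<forall>k'. k < k' \<and> k' \<le> fib (i + 3) \<longrightarrow> A105774 k' < A105774 k)"
    using G2[OF j] unfolding k_def by (simp add: numeral_eq_Suc)
  have f1: "1 \<le> fib (i+1)" using fib_ge1[of "i+1"] by simp
  have kb: "1 \<le> k" "k \<le> fib (i+3)" using n fib_num unfolding k_def by auto
  show ?thesis
  proof (cases "fib (i+2) < k")
    case False
    define k' where "k' = fib (i+2) + 1"
    have k'b: "k < k'" "k' \<le> fib (i+3)" using False f1 fib_num unfolding k'_def by auto
    have "A105774 k' = int (fib (Suc (i+2))) - A105774 (k' - fib (i+2))"
      by (rule a_block) (use k'b False f1 in \<open>auto simp: k'_def\<close>)
    then have ak': "A105774 k' = int (fib (i+3)) - 1" unfolding k'_def by (simp add: a1 numeral_eq_Suc)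
    have "A105774 k \<le> int (fib (i+3)) - 1"
    proof (cases "k = 1")
      case True
      have "2 \<le> fib (i+3)" using fib_num f1 fib_ge1[of "i+2"] by simp
      then show ?thesis using True a1 by simp
    next
      case False
      then have "A105774 k < int (fib (i+2))" using a_up[of k "i+2"] kb \<open>\<not> fib (i+2) < k\<close> by simp
      then show ?thesis using fib_num f1 by simp
    qed
    then have "\<not> good n" using g k'b ak' by fastforce
    then show ?thesis using False unfolding k_def by auto
  next
    case True
    define l where "l = k - fib (i+2)"
    have lb: "1 \<le> l" "l \<le> fib (i+1)" using True kb fib_num unfolding l_def by auto
    have jk: "2 \<le> i + 2" "fib (i+2) < k" "k \<le> fib (Suc (i+2))" using True kb by (auto simp: numeral_eq_Suc)
    have ak: "A105774 k = int (fib (i+3)) - A105774 l"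
      using a_block[OF jk] unfolding l_def by (simp add: numeral_eq_Suc)
    have "(\<forall>k'. k < k' \<and> k' \<le> fib (i + 3) \<longrightarrow> A105774 k' < A105774 k) \<longleftrightarrow>
          (\<forall>l'. l < l' \<and> l' \<le> fib (i+1) \<longrightarrow> A105774 l' > A105774 l)"
    proof
      assume h: "\<forall>k'. k < k' \<and> k' \<le> fib (i + 3) \<longrightarrow> A105774 k' < A105774 k"
      show "\<forall>l'. l < l' \<and> l' \<le> fib (i+1) \<longrightarrow> A105774 l' > A105774 l"
      proof (intro allI impI)
        fix l' assume l': "l < l' \<and> l' \<le> fib (i+1)"
        have kk: "k < fib (i+2) + l'" "fib (i+2) + l' \<le> fib (i+3)" using l' fib_num True unfolding l_def by auto
        have "A105774 (fib (i+2) + l') = int (fib (Suc (i+2))) - A105774 (fib (i+2) + l' - fib (i+2))"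
          by (rule a_block) (use l' kk in auto)
        then have "A105774 (fib (i+2) + l') = int (fib (i+3)) - A105774 l'" by (simp add: numeral_eq_Suc)
        moreover have "A105774 (fib (i+2) + l') < A105774 k" using h kk by blast
        ultimately show "A105774 l' > A105774 l" using ak by simp
      qed
    next
      assume h: "\<forall>l'. l < l' \<and> l' \<le> fib (i+1) \<longrightarrow> A105774 l' > A105774 l"
      show "\<forall>k'. k < k' \<and> k' \<le> fib (i + 3) \<longrightarrow> A105774 k' < A105774 k"
      proof (intro allI impI)
        fix k' assume k': "k < k' \<and> k' \<le> fib (i + 3)"
        have "A105774 k' = int (fib (Suc (i+2))) - A105774 (k' - fib (i+2))"
          by (rule a_block) (use k' True fib_num in auto)
        then have "A105774 k' = int (fib (i+3)) - A105774 (k' - fib (i+2))" by (simp add: numeral_eq_Suc)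
        moreover have "A105774 (k' - fib (i+2)) > A105774 l"
        proof (rule h[rule_format])
          show "l < k' - fib (i + 2) \<and> k' - fib (i + 2) \<le> fib (i + 1)"
            using k' True fib_num unfolding l_def by auto
        qed
        ultimately show "A105774 k' < A105774 k" using ak by simp
      qed
    qed
    also have "\<dots> \<longleftrightarrow> (l = fib (i+1) \<or> good l)" by (rule L_good[OF lb])
    finally have "good n \<longleftrightarrow> (l = fib (i+1) \<or> good l)" using g by simp
    moreover have "l = fib (i+1) \<longleftrightarrow> n = fib (i+5)" using fib_num True unfolding l_def k_def by auto
    moreover have "l = n - fib (i+4) - fib (i+2)" unfolding l_def k_def by simp
    moreover have "fib (i+4) + fib (i+2) < n" using True unfolding k_def by auto
    ultimately show ?thesis by simp
  qed
qed

inductive R :: "nat \<Rightarrow> bool" where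
  Rfib: "3 \<le> j \<Longrightarrow> R (fib j)"
| Rstep: "R l \<Longrightarrow> l < fib (i+1) \<Longrightarrow> R (fib (i+4) + fib (i+2) + l)"

lemma R_pos: "R n \<Longrightarrow> 1 \<le> n"
  by (induction rule: R.induct) (use fib_ge1 in auto)

lemma good2: "good 2"
proof -
  have j: "2 \<le> (2::nat)" "fib 2 < 2" "2 \<le> fib (Suc 2)" by (auto simp: numeral_eq_Suc)
  show ?thesis using G2[OF j] by (simp add: numeral_eq_Suc)
qed

lemma good3: "good 3"
proof -
  have j: "2 \<le> (3::nat)" "fib 3 < 3" "3 \<le> fib (Suc 3)" by (auto simp: numeral_eq_Suc)
  show ?thesis using G2[OF j] by (simp add: numeral_eq_Suc)
qed

lemma good_fib5: "good (fib (i+5))"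
proof -
  have "1 \<le> fib (i+1)" using fib_ge1[of "i+1"] by simp
  moreover have "1 \<le> fib (i+2)" using fib_ge1[of "i+2"] by simp
  ultimately have "fib (i+4) < fib (i+5)" "fib (i+4) + fib (i+2) < fib (i+5)" using fib_num[of i] by auto
  then show ?thesis using G3[of i "fib (i+5)"] by simp
qed

lemma R_good: "R n \<Longrightarrow> good n"
proof (induction rule: R.induct)
  case (Rfib j)
  show ?case
  proof (cases "j = 3")
    case True then show ?thesis using good2 by (simp add: numeral_eq_Suc)
  next
    case False
    show ?thesis
    proof (cases "j = 4")
      case True then show ?thesis using good3 by (simp add: numeral_eq_Suc)
    next
      case False
      define i where "i = j - 5"
      have "j = i + 5" using \<open>j \<noteq> 3\<close> False Rfib.hyps unfolding i_def by arith
      then show ?thesis using good_fib5 by simp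
    qed
  qed
next
  case (Rstep l i)
  have l1: "1 \<le> l" using R_pos[OF Rstep.hyps(1)] .
  have "fib (i+4) < fib (i+4) + fib (i+2) + l" "fib (i+4) + fib (i+2) + l \<le> fib (i+5)"
    using l1 Rstep.hyps(2) fib_num[of i] by auto
  then show ?case using G3[of i "fib (i+4) + fib (i+2) + l"] Rstep.IH l1 by simp
qed

lemma good_R: "1 \<le> n \<Longrightarrow> good n \<Longrightarrow> R n"
proof (induction n rule: less_induct)
  case (less n)
  have "n \<noteq> 1" using less.prems not_good1 by auto
  then have "2 \<le> n" using less.prems by simp
  then obtain j where j: "2 \<le> j" "fib j < n" "n \<le> fib (Suc j)" using block_ex by blast
  show ?case
  proof (cases "j \<le> 3")
    case True
    then have "j = 2 \<or> j = 3" using j by auto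
    then have "n = fib 3 \<or> n = fib 4" using j by (auto simp: numeral_eq_Suc)
    then show ?thesis using R.Rfib[of 3] R.Rfib[of 4] by auto
  next
    case False
    define i where "i = j - 4"
    have i: "j = i + 4" using False unfolding i_def by arith
    have n: "fib (i+4) < n" "n \<le> fib (i+5)" using j i by (auto simp: numeral_eq_Suc)
    from G3[OF n] less.prems have g: "fib (i+4) + fib (i+2) < n"
      "n = fib (i+5) \<or> good (n - fib (i+4) - fib (i+2))" by auto
    show ?thesis
    proof (cases "n = fib (i+5)")
      case True then show ?thesis using R.Rfib[of "i+5"] by simp
    next
      case False
      define l where "l = n - fib (i+4) - fib (i+2)"
      have lb: "1 \<le> l" "l < fib (i+1)" "l < n" using g n False fib_num[of i] unfolding l_def by auto
      have "R l" using less.IH[OF lb(3) lb(1)] g False unfolding l_def by simp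
      then have "R (fib (i+4) + fib (i+2) + l)" using lb(2) by (rule R.Rstep)
      moreover have "fib (i+4) + fib (i+2) + l = n" using g unfolding l_def by simp
      ultimately show ?thesis by simp
    qed
  qed
qed



lemma fib_value_Nil [simp]: "fib_value [] = 0"
  by (simp add: fib_value_def)

lemma fib_value_Cons [simp]: "fib_value (d # w) = d * fib (length w + 2) + fib_value w"
  unfolding fib_value_def
  apply (simp only: length_Cons)
  apply (subst sum.lessThan_Suc_shift)
  apply (simp add: Suc_diff_le del: sum.lessThan_Suc)
  done

lemma fib_value_rep0 [simp]: "fib_value (replicate k 0 @ w) = fib_value w"
  by (induction k) auto

fun nc :: "nat list \<Rightarrow> bool" where
  "nc [] = True"
| "nc [d] = (d \<le> 1)"
| "nc (d # e # w) = (d \<le> 1 \<and> \<not> (d = 1 \<and> e = 1) \<and> nc (e # w))"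

lemma nc_tl: "nc (d # w) \<Longrightarrow> nc w"
  by (cases w) auto

lemma nc_hd: "nc (d # w) \<Longrightarrow> d \<le> 1"
  by (cases w) auto

lemma nc_0 [simp]: "nc (0 # w) = nc w"
  by (cases w) auto

lemma nc_10 [simp]: "nc (1 # 0 # w) = nc w"
  by simp

lemma nc_rep0 [simp]: "nc (replicate k 0 @ w) = nc w"
  by (induction k) auto

lemma all_nat_split: "(\<forall>i::nat. Q i) = (Q 0 \<and> (\<forall>i. Q (Suc i)))"
  by (metis not0_implies_Suc)

lemma nc_iff: "nc w \<longleftrightarrow> (set w \<subseteq> {0, 1} \<and> (\<forall>i. Suc i < length w \<longrightarrow> \<not> (w ! i = 1 \<and> w ! Suc i = 1)))"
proof (induction w rule: nc.induct)
  case 1 then show ?case by simp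
next
  case (2 d) then show ?case by auto
next
  case (3 d e w)
  have "(\<forall>i. Suc i < length (d # e # w) \<longrightarrow> \<not> ((d # e # w) ! i = 1 \<and> (d # e # w) ! Suc i = 1))
     \<longleftrightarrow> (\<not> (d = 1 \<and> e = 1) \<and> (\<forall>i. Suc i < length (e # w) \<longrightarrow> \<not> ((e # w) ! i = 1 \<and> (e # w) ! Suc i = 1)))"
    by (subst all_nat_split) simp
  then show ?case using 3 by auto
qed

lemma is_fib_rep_iff: "is_fib_rep w \<longleftrightarrow> (w \<noteq> [] \<and> hd w = 1 \<and> nc w)"
  unfolding is_fib_rep_def nc_iff by blast

lemma nc_bound: "nc w \<Longrightarrow> fib_value w < fib (length w + 2)"
proof (induction "length w" arbitrary: w rule: less_induct)
  case less
  show ?case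
  proof (cases w)
    case Nil then show ?thesis by simp
  next
    case (Cons d w1)
    note w = Cons
    show ?thesis
    proof (cases w1)
      case Nil then show ?thesis using less.prems w by (cases d) (auto simp: numeral_eq_Suc)
    next
      case (Cons e w2)
      have ih: "fib_value (e # w2) < fib (length w2 + 3)"
        using less.hyps[of "e # w2"] less.prems w Cons nc_tl by (simp add: numeral_eq_Suc)
      show ?thesis
      proof (cases "d = 0")
        case True
        then show ?thesis using ih fib_mono[of "length w2 + 3" "length w2 + 4"] w Cons by (simp add: numeral_eq_Suc)
      next
        case False
        then have d: "d = 1" "e = 0" using less.prems w Cons nc_hd[of e w2] by auto
        have "fib_value w2 < fib (length w2 + 2)"
          using less.hyps[of w2] less.prems w Cons d by (simp add: nc_tl)
        then show ?thesis using d w Cons by (simp add: numeral_eq_Suc)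
      qed
    qed
  qed
qed

lemma nc_unique_len: "nc u \<Longrightarrow> nc v \<Longrightarrow> length u = length v \<Longrightarrow> fib_value u = fib_value v \<Longrightarrow> u = v"
proof (induction u arbitrary: v)
  case Nil then show ?case by simp
next
  case (Cons d u)
  obtain e v' where v: "v = e # v'" using Cons.prems by (cases v) auto
  have nu: "nc u" "d \<le> 1" using Cons.prems nc_tl nc_hd by blast+
  have nv: "nc v'" "e \<le> 1" using Cons.prems v nc_tl nc_hd by blast+
  have len: "length u = length v'" using Cons.prems v by simp
  have bu: "fib_value u < fib (length u + 2)" using nc_bound nu by blast
  have bv: "fib_value v' < fib (length u + 2)" using nc_bound nv len by simp
  show ?case
  proof (cases "d = e")
    case True
    then have "fib_value u = fib_value v'" using Cons.prems v by simp
    then show ?thesis using Cons.IH[OF nu(1) nv(1) len] True v by simp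
  next
    case False
    then have "(d = 1 \<and> e = 0) \<or> (d = 0 \<and> e = 1)" using nu nv by auto
    then show ?thesis using Cons.prems v bu bv len by auto
  qed
qed

lemma rep_low: "w \<noteq> [] \<Longrightarrow> hd w = 1 \<Longrightarrow> fib (length w + 1) \<le> fib_value w"
  by (cases w) auto

lemma rep_unique: "is_fib_rep u \<Longrightarrow> is_fib_rep v \<Longrightarrow> fib_value u = fib_value v \<Longrightarrow> u = v"
proof -
  assume u: "is_fib_rep u" and v: "is_fib_rep v" and e: "fib_value u = fib_value v"
  have ub: "fib (length u + 1) \<le> fib_value u" "fib_value u < fib (length u + 2)"
    using u rep_low nc_bound unfolding is_fib_rep_iff by blast+
  have vb: "fib (length v + 1) \<le> fib_value v" "fib_value v < fib (length v + 2)"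
    using v rep_low nc_bound unfolding is_fib_rep_iff by blast+
  have "length u = length v"
  proof (rule ccontr)
    assume "length u \<noteq> length v"
    then have "length u + 2 \<le> length v + 1 \<or> length v + 2 \<le> length u + 1" by arith
    then show False
    proof
      assume "length u + 2 \<le> length v + 1"
      then have "fib (length u + 2) \<le> fib (length v + 1)" by (rule fib_mono)
      then show False using ub vb e by simp
    next
      assume "length v + 2 \<le> length u + 1"
      then have "fib (length v + 2) \<le> fib (length u + 1)" by (rule fib_mono)
      then show False using ub vb e by simp
    qed
  qed
  then show "u = v" using nc_unique_len u v e unfolding is_fib_rep_iff by blast
qed

lemma nc_exists: "n < fib (t + 2) \<Longrightarrow> \<exists>w. length w = t \<and> nc w \<and> fib_value w = n"
proof (induction t arbitrary: n rule: less_induct)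
  case (less t)
  show ?case
  proof (cases t)
    case 0 then show ?thesis using less.prems by simp
  next
    case (Suc t')
    show ?thesis
    proof (cases "n < fib (t' + 2)")
      case True
      obtain w where "length w = t'" "nc w" "fib_value w = n" using less.IH[of t' n] True Suc by auto
      then show ?thesis using Suc by (intro exI[of _ "0 # w"]) simp
    next
      case False
      have f: "fib (t + 2) = fib (t' + 2) + fib (t' + 1)" using Suc by (simp add: numeral_eq_Suc)
      define r where "r = n - fib (t' + 2)"
      have r: "r < fib (t' + 1)" "n = fib (t' + 2) + r" using less.prems f False unfolding r_def by auto
      show ?thesis
      proof (cases t')
        case 0
        then have "n = 1" using r by simp
        then show ?thesis using Suc 0 by (intro exI[of _ "[1]"]) simp
      next
        case (Suc t'')
        obtain w where w: "length w = t''" "nc w" "fib_value w = r"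
          using less.IH[of t'' r] r Suc \<open>t = Suc t'\<close> by (auto simp: numeral_eq_Suc)
        show ?thesis using w r Suc \<open>t = Suc t'\<close> by (intro exI[of _ "1 # 0 # w"]) simp
      qed
    qed
  qed
qed

lemma nc_dropWhile: "nc w \<Longrightarrow> nc (dropWhile (\<lambda>d. d = 0) w)"
  by (induction w) (auto dest: nc_tl)

lemma value_dropWhile: "fib_value (dropWhile (\<lambda>d. d = 0) w) = fib_value w"
  by (induction w) auto

lemma rep_exists: "1 \<le> n \<Longrightarrow> \<exists>w. is_fib_rep w \<and> fib_value w = n"
proof -
  assume n: "1 \<le> n"
  have "n < fib (Suc n + 2)" using fib_ge_idx[of "Suc n"] by simp
  then obtain w where w: "nc w" "fib_value w = n" using nc_exists by blast
  define v where "v = dropWhile (\<lambda>d. d = 0) w"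
  have v: "nc v" "fib_value v = n" using w nc_dropWhile value_dropWhile unfolding v_def by auto
  have "v \<noteq> []" using v n by auto
  moreover have "hd v \<noteq> 0" using \<open>v \<noteq> []\<close> unfolding v_def using hd_dropWhile by blast
  moreover have "hd v \<le> 1" using v(1) \<open>v \<noteq> []\<close> nc_hd by (cases v) auto
  ultimately show ?thesis using v by (intro exI[of _ v]) (simp add: is_fib_rep_iff)
qed



definition W :: "nat list \<Rightarrow> nat \<Rightarrow> nat list" where
  "W ks m = [1,0] @ concat (map (\<lambda>k. [1,0] @ replicate k 0 @ [1,0]) ks) @ replicate m 0"

lemma fib_value_rep0' [simp]: "fib_value (replicate k 0) = 0"
  using fib_value_rep0[of k "[]"] by simp

lemma nc_rep0' [simp]: "nc (replicate k 0)"
  using nc_rep0[of k "[]"] by simp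

lemma W_Nil: "W [] m = 1 # 0 # replicate m 0"
  by (simp add: W_def)

lemma W_Cons: "W (k # ks) m = 1 # 0 # 1 # 0 # (replicate k 0 @ W ks m)"
  by (simp add: W_def)

lemma W_nc: "nc (W ks m)"
  by (induction ks) (auto simp: W_Nil W_Cons)

lemma W_rep: "is_fib_rep (W ks m)"
  using W_nc[of ks m] by (cases ks) (auto simp: is_fib_rep_iff W_Nil W_Cons)

lemma W_value_Cons: "fib_value (W (k # ks) m) = fib (k + length (W ks m) + 5) + fib (k + length (W ks m) + 3) + fib_value (W ks m)"
  by (simp add: W_Cons add.commute add.left_commute numeral_eq_Suc)

lemma W_value_Cons': "fib_value (W (k # ks) m) = fib ((k + length (W ks m) + 1) + 4) + fib ((k + length (W ks m) + 1) + 2) + fib_value (W ks m)"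
proof -
  have "(k + length (W ks m) + 1) + 4 = k + length (W ks m) + 5" "(k + length (W ks m) + 1) + 2 = k + length (W ks m) + 3" by simp_all
  then show ?thesis by (simp only: W_value_Cons)
qed

lemma W_Nil_value: "fib_value (W [] m) = fib (m + 3)" by (simp add: W_Nil numeral_eq_Suc)

lemma W_R: "R (fib_value (W ks m))"
proof (induction ks)
  case Nil
  have "fib_value (W [] m) = fib (m + 3)" by (simp add: W_Nil numeral_eq_Suc)
  then show ?case using R.Rfib[of "m+3"] by simp
next
  case (Cons k ks)
  define s where "s = length (W ks m)"
  have "fib_value (W ks m) < fib (s + 2)" using nc_bound W_nc unfolding s_def by blast
  also have "\<dots> \<le> fib (k + s + 1 + 1)" by (rule fib_mono) simp
  finally have "R (fib ((k + s + 1) + 4) + fib ((k + s + 1) + 2) + fib_value (W ks m))"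
    using Cons.IH by (intro R.Rstep) auto
  then show ?case unfolding W_value_Cons' s_def[symmetric] by assumption
qed

lemma R_W: "R n \<Longrightarrow> \<exists>ks m. fib_value (W ks m) = n"
proof (induction rule: R.induct)
  case (Rfib j)
  have "fib_value (W [] (j - 3)) = fib j" using Rfib W_Nil_value[of "j - 3"] by simp
  then show ?case by blast
next
  case (Rstep l i)
  then obtain ks m where v: "fib_value (W ks m) = l" by blast
  define s where "s = length (W ks m)"
  have "fib (s + 1) \<le> l" using rep_low[of "W ks m"] W_rep[of ks m] v unfolding s_def is_fib_rep_iff by blast
  then have "s < i"
  proof -
    assume h: "fib (s + 1) \<le> l"
    show "s < i"
    proof (rule ccontr)
      assume "\<not> s < i" then have "fib (i + 1) \<le> fib (s + 1)" by (intro fib_mono) simp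
      then show False using h Rstep.hyps(2) by simp
    qed
  qed
  define k where "k = i - s - 1"
  have i: "i = k + s + 1" using \<open>s < i\<close> unfolding k_def by simp
  have "fib_value (W (k # ks) m) = fib (i + 4) + fib (i + 2) + l"
    unfolding W_value_Cons' v i s_def[symmetric] ..
  then show ?case by blast
qed

lemma lang_W: "w \<in> lang \<longleftrightarrow> (\<exists>ks m. w = W ks m)"
  unfolding lang_def W_def by auto

theorem theorem8:
  fixes n :: nat
  assumes "n > 0"
  shows "(\<forall>m. m > n \<longrightarrow> A105774 m > A105774 n) \<longleftrightarrow> fib_rep n \<in> lang"
proof -
  obtain w where w: "is_fib_rep w" "fib_value w = n" using rep_exists[of n] assms by auto
  have fr: "fib_rep n = w" unfolding fib_rep_def
  proof (rule the_equality)
    show "is_fib_rep w \<and> fib_value w = n" using w by simp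
  next
    fix v assume "is_fib_rep v \<and> fib_value v = n"
    then show "v = w" using rep_unique w by auto
  qed
  have "(\<forall>m. m > n \<longrightarrow> A105774 m > A105774 n) \<longleftrightarrow> good n" unfolding good_def by simp
  also have "\<dots> \<longleftrightarrow> R n" using R_good good_R assms by fastforce
  also have "\<dots> \<longleftrightarrow> w \<in> lang"
  proof
    assume "R n"
    then obtain ks m where "fib_value (W ks m) = n" using R_W by blast
    then have "W ks m = w" using rep_unique[OF W_rep w(1)] w(2) by simp
    then show "w \<in> lang" unfolding lang_W by blast
  next
    assume "w \<in> lang"
    then obtain ks m where "w = W ks m" unfolding lang_W by blast
    then show "R n" using W_R w(2) by blast
  qed
  finally show ?thesis using fr by simp
qed


end
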